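(* Let $q$ be a prime power and $r,k\ge 2$ integers, $n=rk$. Let $g_{r,k}:\mathbb{F}_q^n\to\mathbb{F}_q$, $g_{r,k}(x_1,\dots,x_n)=\sum_{j=0}^{k-1}x_{jr+1}x_{jr+2}\cdots x_{jr+r}$. Then the linear code $$\mathcal{C}_{g_{r,k}}=\{(u\,g_{r,k}(x)+v\cdot x)_{x\in\mathbb{F}_q^n\setminus\{0\}}\ :\ u\in\mathbb{F}_q,\ v\in\mathbb{F}_q^n\}$$ satisfies Property (P).
   Context: Here $v\cdot x$ denotes the standard inner product $\sum_i v_ix_i$, and coordinates of codewords are indexed by the nonzero vectors $x\in\mathbb{F}_q^n$ in some fixed order. Property (P): every nonzero codeword $w=(w_1,\dots,w_N)$ satisfies $\{w_1,\dots,w_N\}=\mathbb{F}_q$, i.e. its coordinates take all $q$ values of $\mathbb{F}_q$. *)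

theory Defs
  imports Main
begin

text \<open>Vectors of F_q^n are modelled as functions nat => 'a supported on {0..<n}
  (coordinates 0..n-1, i.e. x_1..x_n shifted by one).\<close>

definition vecs :: "nat \<Rightarrow> (nat \<Rightarrow> 'a::zero) set" where
  "vecs n = {x. \<forall>i. n \<le> i \<longrightarrow> x i = 0}"

definition nonzero_vecs :: "nat \<Rightarrow> (nat \<Rightarrow> 'a::zero) set" where
  "nonzero_vecs n = vecs n - {(\<lambda>_. 0)}"

definition dotp :: "nat \<Rightarrow> (nat \<Rightarrow> 'a::comm_semiring_1) \<Rightarrow> (nat \<Rightarrow> 'a) \<Rightarrow> 'a" where
  "dotp n v x = (\<Sum>i<n. v i * x i)"

definition g_rk :: "nat \<Rightarrow> nat \<Rightarrow> (nat \<Rightarrow> 'a::comm_semiring_1) \<Rightarrow> 'a" where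
  "g_rk r k x = (\<Sum>j<k. \<Prod>i<r. x (j * r + i))"

definition code_of :: "nat \<Rightarrow> ((nat \<Rightarrow> 'a::comm_semiring_1) \<Rightarrow> 'a) \<Rightarrow> ((nat \<Rightarrow> 'a) \<Rightarrow> 'a) set" where
  "code_of n f = {(\<lambda>x. u * f x + dotp n v x) | u v. v \<in> vecs n}"

definition property_P :: "'b set \<Rightarrow> ('b \<Rightarrow> 'a::zero) set \<Rightarrow> bool" where
  "property_P I C = (\<forall>w\<in>C. (\<exists>x\<in>I. w x \<noteq> 0) \<longrightarrow> w ` I = UNIV)"

end

theory Submission
  imports Defs
begin

lemma dot_single:
  fixes v :: "nat \<Rightarrow> 'a::field"
  assumes "i < n"
  shows "dotp n v (\<lambda>j. if j = i then a else 0) = v i * a"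
proof -
  have "dotp n v (\<lambda>j. if j = i then a else 0) = (\<Sum>j<n. if j = i then v j * a else 0)"
    unfolding dotp_def by (intro sum.cong) auto
  also have "\<dots> = v i * a" using assms by (simp add: sum.delta)
  finally show ?thesis .
qed

lemma dot_two:
  fixes v :: "nat \<Rightarrow> 'a::field"
  assumes "i < n" "j < n" "i \<noteq> j"
  shows "dotp n v (\<lambda>m. if m = i then a else if m = j then b else 0) = v i * a + v j * b"
proof -
  have "dotp n v (\<lambda>m. if m = i then a else if m = j then b else 0)
      = (\<Sum>m<n. (if m = i then v m * a else 0) + (if m = j then v m * b else 0))"
    unfolding dotp_def using assms by (intro sum.cong) auto
  also have "\<dots> = v i * a + v j * b" using assms by (simp add: sum.distrib sum.delta)
  finally show ?thesis .
qed

lemma dot_three: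
  fixes v y :: "nat \<Rightarrow> 'a::field"
  assumes "0 < n" "1 < n"
  shows "dotp n v (\<lambda>i. if i = 0 then t else if i = 1 then s else y i)
         = t * v 0 + s * v 1 + dotp n v (\<lambda>i. if i = 0 then 0 else if i = 1 then 0 else y i)"
proof -
  have "dotp n v (\<lambda>i. if i = 0 then t else if i = 1 then s else y i)
      = (\<Sum>i<n. (if i = 0 then v i * t else 0) + (if i = 1 then v i * s else 0)
            + v i * (if i = 0 then 0 else if i = 1 then 0 else y i))"
    unfolding dotp_def by (intro sum.cong) auto
  also have "\<dots> = t * v 0 + s * v 1 + dotp n v (\<lambda>i. if i = 0 then 0 else if i = 1 then 0 else y i)"
    using assms by (simp add: sum.distrib sum.delta dotp_def mult.commute)
  finally show ?thesis .
qed

theorem mainTheorem8: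
  fixes r k :: nat
  assumes "r \<ge> 2" and "k \<ge> 2"
  shows "property_P (nonzero_vecs (r * k))
           (code_of (r * k) (g_rk r k :: (nat \<Rightarrow> 'a::{finite, field}) \<Rightarrow> 'a))"
  unfolding property_P_def
proof (intro ballI impI)
  let ?n = "r * k"
  have n4: "2 * r \<le> ?n" using assms by simp
  have n2: "2 < ?n" using n4 assms by linarith
  fix w :: "(nat \<Rightarrow> 'a) \<Rightarrow> 'a"
  assume "w \<in> code_of ?n (g_rk r k)"
  then obtain u v where w: "w = (\<lambda>x. u * g_rk r k x + dotp ?n v x)" and v: "v \<in> vecs ?n"
    unfolding code_of_def by blast
  assume nz: "\<exists>x\<in>nonzero_vecs ?n. w x \<noteq> 0"
  show "w ` nonzero_vecs ?n = UNIV"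
  proof (cases "u = 0")
    case True
    then have wv: "w = dotp ?n v" using w by auto
    obtain i where i: "i < ?n" "v i \<noteq> 0"
    proof -
      from nz obtain x where "dotp ?n v x \<noteq> 0" using wv by auto
      then obtain i where "i < ?n" "v i * x i \<noteq> 0" unfolding dotp_def
        by (meson sum.neutral lessThan_iff)
      then show ?thesis using that by auto
    qed
    define j where "j = (if i = 0 then 1 else 0::nat)"
    have j1: "j \<le> 1" by (simp add: j_def)
    have j: "j < ?n" "j \<noteq> i" using j1 n2 apply linarith using j_def by simp
    show ?thesis
    proof (rule set_eqI, rule iffI[OF UNIV_I])
      fix c :: 'a
      show "c \<in> w ` nonzero_vecs ?n"
      proof (cases "c = 0")
        case True
        let ?x = "\<lambda>m. if m = i then v j else if m = j then - v i else 0"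
        have "?x j \<noteq> 0" using i j by auto
        then have ne: "?x \<noteq> (\<lambda>_. 0)" by metis
        have "?x \<in> vecs ?n" unfolding vecs_def using i j by auto
        then have mem: "?x \<in> nonzero_vecs ?n" unfolding nonzero_vecs_def using ne by blast
        have "w ?x = dotp ?n v ?x" using wv by (rule fun_cong)
        also have "\<dots> = v i * v j + v j * (- v i)"
          by (rule dot_two[OF i(1) j(1) j(2)[symmetric]])
        also have "\<dots> = 0" by (simp add: mult.commute)
        finally have "w ?x = c" using \<open>c = 0\<close> by simp
        then show ?thesis by (rule image_eqI[OF sym mem])
      next
        case False
        let ?x = "\<lambda>m. if m = i then c / v i else 0"
        have "?x i \<noteq> 0" using i False by auto
        then have ne: "?x \<noteq> (\<lambda>_. 0)" by metis
        have "?x \<in> vecs ?n" unfolding vecs_def using i by auto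
        then have mem: "?x \<in> nonzero_vecs ?n" unfolding nonzero_vecs_def using ne by blast
        have "w ?x = c" using dot_single[OF i(1), of v "c / v i"] wv i by simp
        then show ?thesis by (rule image_eqI[OF sym mem])
      qed
    qed
  next
    case False
    define y :: "nat \<Rightarrow> 'a" where "y = (\<lambda>i. if i \<le> r then 1 else 0)"
    define D where "D = dotp ?n v (\<lambda>i. if i = 0 then 0 else if i = 1 then 0 else y i)"
    define xx where "xx = (\<lambda>t s. (\<lambda>i. if i = 0 then t else if i = 1 then s else y i))"
    have g: "g_rk r k (xx t s) = t * s" for t s
    proof -
      have p0: "(\<Prod>i<r. xx t s (0 * r + i)) = t * s"
      proof -
        have e: "{..<r} = insert 0 (insert 1 {2..<r})" using assms by auto
        have "(\<Prod>i\<in>{2..<r}. xx t s i) = 1"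
          by (intro prod.neutral) (auto simp: xx_def y_def)
        then show ?thesis by (simp add: e xx_def)
      qed
      have pz: "(\<Prod>i<r. xx t s (j * r + i)) = 0" if "j \<in> {..<k} - {0}" for j
      proof (intro prod_zero)
        show "\<exists>a\<in>{..<r}. xx t s (j * r + a) = 0"
        proof
          from that have "j \<ge> 1" by auto
          then have "j * r \<ge> r" by simp
          then have "\<not> j * r + 1 \<le> r" "j * r + 1 \<noteq> 0" "j * r + 1 \<noteq> 1" using assms by linarith+
          then show "xx t s (j * r + 1) = 0" unfolding xx_def y_def by presburger
        qed (use assms in auto)
      qed simp
      have "g_rk r k (xx t s) = (\<Prod>i<r. xx t s (0 * r + i))
            + (\<Sum>j\<in>{..<k} - {0}. \<Prod>i<r. xx t s (j * r + i))"
        unfolding g_rk_def using assms by (subst sum.remove[of _ 0]) auto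
      also have "(\<Sum>j\<in>{..<k} - {0}. \<Prod>i<r. xx t s (j * r + i)) = 0"
        by (rule sum.neutral) (use pz in blast)
      also have "(\<Prod>i<r. xx t s (0 * r + i)) + 0 = t * s" using p0 by simp
      finally show ?thesis .
    qed
    have d: "dotp ?n v (xx t s) = t * v 0 + s * v 1 + D" for t s
      unfolding xx_def D_def using dot_three[of ?n v t s y] n4 assms by simp
    have mem: "xx t s \<in> nonzero_vecs ?n" for t s
    proof -
      have "xx t s r = 1" using assms by (simp add: xx_def y_def)
      then have ne: "xx t s \<noteq> (\<lambda>_. 0)" by (metis one_neq_zero)
      have "\<forall>i. ?n \<le> i \<longrightarrow> xx t s i = 0"
      proof (intro allI impI)
        fix i assume "?n \<le> i"
        then have "r < i" "i \<noteq> 0" "i \<noteq> 1" using n4 assms by linarith+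
        then show "xx t s i = 0" by (simp add: xx_def y_def)
      qed
      then show ?thesis unfolding nonzero_vecs_def vecs_def using ne by blast
    qed
    show ?thesis
    proof (rule set_eqI, rule iffI[OF UNIV_I])
      fix c :: 'a
      define s where "s = (u - v 0) / u"
      define t where "t = (c - s * v 1 - D) / u"
      have "u * s + v 0 = u" using False by (simp add: s_def field_simps)
      have "w (xx t s) = t * (u * s + v 0) + s * v 1 + D"
        using g d w by (simp add: algebra_simps)
      also have "\<dots> = c" using \<open>u * s + v 0 = u\<close> False by (simp add: t_def field_simps)
      finally show "c \<in> w ` nonzero_vecs ?n" by (rule image_eqI[OF sym mem])
    qed
  qed
qed

end
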